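(* Let $\Gamma$ act by automorphisms on a finite dimensional CAT(0) cube complex $X$. If the action is Roller elementary (some $\Gamma$-orbit in $\overline X$ is finite), then there are $v,w\in\overline X$ with $\Gamma\cdot\mathcal I(v,w)=\mathcal I(v,w)$. If moreover some $\Gamma$-orbit in $\overline X$ has odd cardinality, then $\Gamma$ has a fixed point in $\overline X$.
   Context: $X$ is a finite-dimensional, second countable CAT(0) cube complex identified with its vertex set; $\mathfrak H$ its half-spaces; $U_v=\{h:v\in h\}$; the Roller compactification $\overline X$ is the closure of $\{U_v\}$ in $2^{\mathfrak H}$, each $\xi\in\overline X$ being a subset $U_\xi\subset\mathfrak H$. For $v,w\in\overline X$, $\mathcal I(v,w)=\{m\in\overline X:U_v\cap U_w\subset U_m\}$. *)

theory Defs
  imports "HOL-Algebra.Group_Action" "HOL-Library.Countable_Set"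
begin

text \<open>A CAT(0) cube complex is identified with its vertex set, i.e. with its
1-skeleton, which is a median graph (Chepoi, Roller).\<close>

definition gpath :: "'a set \<Rightarrow> ('a \<Rightarrow> 'a \<Rightarrow> bool) \<Rightarrow> 'a \<Rightarrow> 'a \<Rightarrow> nat \<Rightarrow> bool" where
  "gpath V E x y n \<longleftrightarrow> (\<exists>xs. length xs = Suc n \<and> hd xs = x \<and> last xs = y \<and> set xs \<subseteq> V
      \<and> (\<forall>i<n. E (xs ! i) (xs ! Suc i)))"

definition gdist :: "'a set \<Rightarrow> ('a \<Rightarrow> 'a \<Rightarrow> bool) \<Rightarrow> 'a \<Rightarrow> 'a \<Rightarrow> nat" where
  "gdist V E x y = (LEAST n. gpath V E x y n)"

definition ginterval :: "'a set \<Rightarrow> ('a \<Rightarrow> 'a \<Rightarrow> bool) \<Rightarrow> 'a \<Rightarrow> 'a \<Rightarrow> 'a set" where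
  "ginterval V E x y = {z \<in> V. gdist V E x z + gdist V E z y = gdist V E x y}"

definition median_graph :: "'a set \<Rightarrow> ('a \<Rightarrow> 'a \<Rightarrow> bool) \<Rightarrow> bool" where
  "median_graph V E \<longleftrightarrow>
     (\<forall>x y. E x y \<longrightarrow> x \<in> V \<and> y \<in> V \<and> E y x \<and> x \<noteq> y) \<and>
     (\<forall>x\<in>V. \<forall>y\<in>V. \<exists>n. gpath V E x y n) \<and>
     (\<forall>x\<in>V. \<forall>y\<in>V. \<forall>z\<in>V. \<exists>!m. m \<in> ginterval V E x y \<inter> ginterval V E y z \<inter> ginterval V E x z)"

definition gconvex :: "'a set \<Rightarrow> ('a \<Rightarrow> 'a \<Rightarrow> bool) \<Rightarrow> 'a set \<Rightarrow> bool" where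
  "gconvex V E C \<longleftrightarrow> C \<subseteq> V \<and> (\<forall>x\<in>C. \<forall>y\<in>C. ginterval V E x y \<subseteq> C)"

definition halfspaces :: "'a set \<Rightarrow> ('a \<Rightarrow> 'a \<Rightarrow> bool) \<Rightarrow> 'a set set" where
  "halfspaces V E = {h. h \<noteq> {} \<and> h \<subseteq> V \<and> h \<noteq> V \<and> gconvex V E h \<and> gconvex V E (V - h)}"

definition transverse :: "'a set \<Rightarrow> 'a set \<Rightarrow> 'a set \<Rightarrow> bool" where
  "transverse V h k \<longleftrightarrow> h \<inter> k \<noteq> {} \<and> h - k \<noteq> {} \<and> k - h \<noteq> {} \<and> V - (h \<union> k) \<noteq> {}"

text \<open>Finite dimensional: uniform bound on families of pairwise transverse half-spaces
(equivalently, on the dimension of cubes).\<close>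
definition finite_dim :: "'a set \<Rightarrow> ('a \<Rightarrow> 'a \<Rightarrow> bool) \<Rightarrow> bool" where
  "finite_dim V E \<longleftrightarrow> (\<exists>N::nat. \<forall>S \<subseteq> halfspaces V E.
      (\<forall>h\<in>S. \<forall>k\<in>S. h \<noteq> k \<longrightarrow> transverse V h k) \<longrightarrow> finite S \<and> card S \<le> N)"

definition U_vert :: "'a set \<Rightarrow> ('a \<Rightarrow> 'a \<Rightarrow> bool) \<Rightarrow> 'a \<Rightarrow> 'a set set" where
  "U_vert V E v = {h \<in> halfspaces V E. v \<in> h}"

text \<open>Roller compactification: closure of {U_v} in 2^H (product topology), i.e.
subsets of H which agree with some U_v on every finite set of half-spaces.\<close>
definition roller :: "'a set \<Rightarrow> ('a \<Rightarrow> 'a \<Rightarrow> bool) \<Rightarrow> 'a set set set" where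
  "roller V E = {U. U \<subseteq> halfspaces V E \<and>
      (\<forall>F. finite F \<and> F \<subseteq> halfspaces V E \<longrightarrow> (\<exists>v\<in>V. U \<inter> F = U_vert V E v \<inter> F))}"

definition roller_interval :: "'a set \<Rightarrow> ('a \<Rightarrow> 'a \<Rightarrow> bool) \<Rightarrow> 'a set set \<Rightarrow> 'a set set \<Rightarrow> 'a set set set" where
  "roller_interval V E v w = {m \<in> roller V E. v \<inter> w \<subseteq> m}"

definition cube_action :: "('g, 'b) monoid_scheme \<Rightarrow> 'a set \<Rightarrow> ('a \<Rightarrow> 'a \<Rightarrow> bool) \<Rightarrow> ('g \<Rightarrow> 'a \<Rightarrow> 'a) \<Rightarrow> bool" where
  "cube_action G V E \<phi> \<longleftrightarrow> group_action G V \<phi> \<and>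
     (\<forall>g\<in>carrier G. \<forall>x\<in>V. \<forall>y\<in>V. E (\<phi> g x) (\<phi> g y) \<longleftrightarrow> E x y)"

definition roller_act :: "('g \<Rightarrow> 'a \<Rightarrow> 'a) \<Rightarrow> 'g \<Rightarrow> 'a set set \<Rightarrow> 'a set set" where
  "roller_act \<phi> g U = (\<lambda>h. \<phi> g ` h) ` U"

definition roller_orbit :: "('g, 'b) monoid_scheme \<Rightarrow> ('g \<Rightarrow> 'a \<Rightarrow> 'a) \<Rightarrow> 'a set set \<Rightarrow> 'a set set set" where
  "roller_orbit G \<phi> \<xi> = {roller_act \<phi> g \<xi> | g. g \<in> carrier G}"

end

theory Submission
  imports Defs
begin

locale ccx =
  fixes G :: "('g, 'b) monoid_scheme" and V :: "'a set" and E :: "'a \<Rightarrow> 'a \<Rightarrow> bool"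
    and \<phi> :: "'g \<Rightarrow> 'a \<Rightarrow> 'a"
  assumes grp: "group G" and med: "median_graph V E" and cact: "cube_action G V E \<phi>"
begin

lemma ga: "group_action G V \<phi>" using cact unfolding cube_action_def by blast

lemma edge: "g \<in> carrier G \<Longrightarrow> x \<in> V \<Longrightarrow> y \<in> V \<Longrightarrow> E (\<phi> g x) (\<phi> g y) = E x y"
  using cact unfolding cube_action_def by blast

lemma inV: "g \<in> carrier G \<Longrightarrow> x \<in> V \<Longrightarrow> \<phi> g x \<in> V"
  using group_action.element_image[OF ga] by blast

lemma invc: "g \<in> carrier G \<Longrightarrow> inv\<^bsub>G\<^esub> g \<in> carrier G"
  using grp by (simp add: group.inv_closed)

lemma inv1: "g \<in> carrier G \<Longrightarrow> x \<in> V \<Longrightarrow> \<phi> (inv\<^bsub>G\<^esub> g) (\<phi> g x) = x"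
proof -
  assume g: "g \<in> carrier G" and x: "x \<in> V"
  have "\<phi> (inv\<^bsub>G\<^esub> g) (\<phi> g x) = \<phi> (inv\<^bsub>G\<^esub> g \<otimes>\<^bsub>G\<^esub> g) x"
    using group_action.composition_rule[OF ga x invc[OF g] g] by simp
  also have "\<dots> = \<phi> \<one>\<^bsub>G\<^esub> x" using grp g by (simp add: group.l_inv)
  also have "\<dots> = x" using group_action.id_eq_one[OF ga] x by (metis restrict_apply')
  finally show ?thesis .
qed

lemma inv2: "g \<in> carrier G \<Longrightarrow> x \<in> V \<Longrightarrow> \<phi> g (\<phi> (inv\<^bsub>G\<^esub> g) x) = x"
  using inv1[OF invc] grp by (metis group.inv_inv)

lemma one: "x \<in> V \<Longrightarrow> \<phi> \<one>\<^bsub>G\<^esub> x = x"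
  using group_action.id_eq_one[OF ga] by (metis restrict_apply')

lemma gpath_map: "g \<in> carrier G \<Longrightarrow> gpath V E x y n \<Longrightarrow> gpath V E (\<phi> g x) (\<phi> g y) n"
proof -
  assume g: "g \<in> carrier G" and "gpath V E x y n"
  then obtain xs where xs: "length xs = Suc n" "hd xs = x" "last xs = y" "set xs \<subseteq> V"
    "\<forall>i<n. E (xs ! i) (xs ! Suc i)" unfolding gpath_def by blast
  have ne: "xs \<noteq> []" using xs(1) by auto
  show ?thesis unfolding gpath_def
  proof (intro exI[of _ "map (\<phi> g) xs"] conjI allI impI)
    show "length (map (\<phi> g) xs) = Suc n" using xs by simp
    show "hd (map (\<phi> g) xs) = \<phi> g x" using xs ne by (simp add: hd_map)
    show "last (map (\<phi> g) xs) = \<phi> g y" using xs ne by (simp add: last_map)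
    show "set (map (\<phi> g) xs) \<subseteq> V" using xs inV g by auto
    fix i assume i: "i < n"
    have "xs ! i \<in> V" "xs ! Suc i \<in> V" using xs i by (auto intro: nth_mem[THEN subsetD[OF xs(4)]])
    then show "E (map (\<phi> g) xs ! i) (map (\<phi> g) xs ! Suc i)"
      using xs i edge[OF g] by simp
  qed
qed

lemma gpath_iff: "g \<in> carrier G \<Longrightarrow> x \<in> V \<Longrightarrow> y \<in> V \<Longrightarrow>
    gpath V E (\<phi> g x) (\<phi> g y) n = gpath V E x y n"
  using gpath_map gpath_map[OF invc, of g "\<phi> g x" "\<phi> g y"] inv1 by metis

lemma gdist_eq: "g \<in> carrier G \<Longrightarrow> x \<in> V \<Longrightarrow> y \<in> V \<Longrightarrow>
    gdist V E (\<phi> g x) (\<phi> g y) = gdist V E x y"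
proof -
  assume a: "g \<in> carrier G" "x \<in> V" "y \<in> V"
  have "gpath V E (\<phi> g x) (\<phi> g y) = gpath V E x y" using gpath_iff[OF a] by (rule ext)
  then show ?thesis unfolding gdist_def by simp
qed

lemma ginterval_img: "g \<in> carrier G \<Longrightarrow> x \<in> V \<Longrightarrow> y \<in> V \<Longrightarrow>
    \<phi> g ` ginterval V E x y = ginterval V E (\<phi> g x) (\<phi> g y)"
proof
  assume g: "g \<in> carrier G" and x: "x \<in> V" and y: "y \<in> V"
  show "\<phi> g ` ginterval V E x y \<subseteq> ginterval V E (\<phi> g x) (\<phi> g y)"
    unfolding ginterval_def using g x y by (auto simp: gdist_eq inV)
  show "ginterval V E (\<phi> g x) (\<phi> g y) \<subseteq> \<phi> g ` ginterval V E x y"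
  proof
    fix z assume z: "z \<in> ginterval V E (\<phi> g x) (\<phi> g y)"
    define z' where "z' = \<phi> (inv\<^bsub>G\<^esub> g) z"
    have zV: "z \<in> V" using z unfolding ginterval_def by auto
    have z'V: "z' \<in> V" using zV g invc inV z'_def by blast
    have zz: "z = \<phi> g z'" using inv2 g zV z'_def by simp
    have "z' \<in> ginterval V E x y"
      using z unfolding ginterval_def zz using g x y z'V by (simp add: gdist_eq)
    then show "z \<in> \<phi> g ` ginterval V E x y" using zz by blast
  qed
qed

lemma gconvex_img: "g \<in> carrier G \<Longrightarrow> gconvex V E C \<Longrightarrow> gconvex V E (\<phi> g ` C)"
proof -
  assume g: "g \<in> carrier G" and C: "gconvex V E C"
  have CV: "C \<subseteq> V" using C unfolding gconvex_def by blast
  show ?thesis unfolding gconvex_def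
  proof (intro conjI ballI)
    show "\<phi> g ` C \<subseteq> V" using CV inV g by blast
    fix a b assume "a \<in> \<phi> g ` C" "b \<in> \<phi> g ` C"
    then obtain x y where xy: "x \<in> C" "y \<in> C" "a = \<phi> g x" "b = \<phi> g y" by blast
    have "ginterval V E a b = \<phi> g ` ginterval V E x y"
      using ginterval_img[OF g] xy CV by blast
    also have "\<dots> \<subseteq> \<phi> g ` C" using C xy unfolding gconvex_def by blast
    finally show "ginterval V E a b \<subseteq> \<phi> g ` C" .
  qed
qed

lemma img_V: "g \<in> carrier G \<Longrightarrow> \<phi> g ` V = V"
  using group_action.surj_prop[OF ga] by blast

lemma img_inj: "g \<in> carrier G \<Longrightarrow> inj_on (\<phi> g) V"
  using group_action.inj_prop[OF ga] by blast

lemma img_diff: "g \<in> carrier G \<Longrightarrow> C \<subseteq> V \<Longrightarrow> \<phi> g ` (V - C) = V - \<phi> g ` C"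
proof -
  assume g: "g \<in> carrier G" and C: "C \<subseteq> V"
  have "\<phi> g ` (V - C) = \<phi> g ` V - \<phi> g ` C"
    using inj_on_image_set_diff[OF img_inj[OF g], of V C] C by blast
  then show ?thesis using img_V[OF g] by simp
qed

lemma hs_img: "g \<in> carrier G \<Longrightarrow> h \<in> halfspaces V E \<Longrightarrow> \<phi> g ` h \<in> halfspaces V E"
proof -
  assume g: "g \<in> carrier G" and h: "h \<in> halfspaces V E"
  have hV: "h \<subseteq> V" using h unfolding halfspaces_def by blast
  have "\<phi> g ` h \<noteq> V"
  proof
    assume "\<phi> g ` h = V"
    then have "\<phi> g ` h = \<phi> g ` V" using img_V g by simp
    then have "h = V" using inj_on_image_eq_iff[OF img_inj[OF g] hV, of V] by blast
    then show False using h unfolding halfspaces_def by blast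
  qed
  moreover have "gconvex V E (V - \<phi> g ` h)"
    using gconvex_img[OF g, of "V - h"] img_diff[OF g hV] h unfolding halfspaces_def by simp
  ultimately show ?thesis using h hV g inV gconvex_img[OF g]
    unfolding halfspaces_def by (auto simp: image_subset_iff)
qed

lemma hsV: "h \<in> halfspaces V E \<Longrightarrow> h \<subseteq> V"
  unfolding halfspaces_def by blast

lemma compl_H: "h \<in> halfspaces V E \<Longrightarrow> V - h \<in> halfspaces V E"
  unfolding halfspaces_def by (auto simp: Diff_Diff_Int Int_absorb1)

lemma img_inv: "g \<in> carrier G \<Longrightarrow> h \<subseteq> V \<Longrightarrow> \<phi> (inv\<^bsub>G\<^esub> g) ` \<phi> g ` h = h"
  using inv1 by (force simp: image_image)

lemma img_inv2: "g \<in> carrier G \<Longrightarrow> h \<subseteq> V \<Longrightarrow> \<phi> g ` \<phi> (inv\<^bsub>G\<^esub> g) ` h = h"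
  using inv2 by (force simp: image_image)

lemma img_sub: "g \<in> carrier G \<Longrightarrow> h \<subseteq> V \<Longrightarrow> \<phi> g ` h \<subseteq> V"
  using inV by blast

lemma mem_act: "g \<in> carrier G \<Longrightarrow> U \<subseteq> Pow V \<Longrightarrow> h \<subseteq> V \<Longrightarrow>
   (h \<in> roller_act \<phi> g U) = (\<phi> (inv\<^bsub>G\<^esub> g) ` h \<in> U)"
  unfolding roller_act_def
proof
  assume g: "g \<in> carrier G" and U: "U \<subseteq> Pow V" and h: "h \<subseteq> V"
  show "h \<in> (\<lambda>h. \<phi> g ` h) ` U \<Longrightarrow> \<phi> (inv\<^bsub>G\<^esub> g) ` h \<in> U"
    using img_inv[OF g] U by auto
  show "\<phi> (inv\<^bsub>G\<^esub> g) ` h \<in> U \<Longrightarrow> h \<in> (\<lambda>h. \<phi> g ` h) ` U"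
    using img_inv2[OF g h] by (metis image_eqI)
qed

lemma act_sub: "g \<in> carrier G \<Longrightarrow> U \<subseteq> Pow V \<Longrightarrow> roller_act \<phi> g U \<subseteq> Pow V"
  unfolding roller_act_def using img_sub by blast

lemma act_comp: "g \<in> carrier G \<Longrightarrow> k \<in> carrier G \<Longrightarrow> U \<subseteq> Pow V \<Longrightarrow>
    roller_act \<phi> g (roller_act \<phi> k U) = roller_act \<phi> (g \<otimes>\<^bsub>G\<^esub> k) U"
proof -
  assume g: "g \<in> carrier G" and k: "k \<in> carrier G" and U: "U \<subseteq> Pow V"
  have "\<And>h. h \<in> U \<Longrightarrow> \<phi> g ` \<phi> k ` h = \<phi> (g \<otimes>\<^bsub>G\<^esub> k) ` h"
  proof -
    fix h assume "h \<in> U"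
    then have "h \<subseteq> V" using U by blast
    then show "\<phi> g ` \<phi> k ` h = \<phi> (g \<otimes>\<^bsub>G\<^esub> k) ` h"
      using group_action.composition_rule[OF ga _ g k] by (force simp: image_image)
  qed
  then show ?thesis unfolding roller_act_def by (force simp: image_image)
qed

lemma act_one: "U \<subseteq> Pow V \<Longrightarrow> roller_act \<phi> \<one>\<^bsub>G\<^esub> U = U"
proof -
  assume U: "U \<subseteq> Pow V"
  have "\<And>h. h \<in> U \<Longrightarrow> \<phi> \<one>\<^bsub>G\<^esub> ` h = h"
  proof -
    fix h assume "h \<in> U"
    then have "h \<subseteq> V" using U by blast
    then show "\<phi> \<one>\<^bsub>G\<^esub> ` h = h" using one by force
  qed
  then show ?thesis unfolding roller_act_def by force
qed

lemma act_inv: "g \<in> carrier G \<Longrightarrow> U \<subseteq> Pow V \<Longrightarrow>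
    roller_act \<phi> (inv\<^bsub>G\<^esub> g) (roller_act \<phi> g U) = U"
  using act_comp[OF invc] act_one grp by (simp add: group.l_inv)

lemma act_inv2: "g \<in> carrier G \<Longrightarrow> U \<subseteq> Pow V \<Longrightarrow>
    roller_act \<phi> g (roller_act \<phi> (inv\<^bsub>G\<^esub> g) U) = U"
  using act_comp[OF _ invc] act_one grp by (simp add: group.r_inv)

lemma H_Pow: "halfspaces V E \<subseteq> Pow V" using hsV by blast

lemma R0: "\<xi> \<in> roller V E \<Longrightarrow> V \<noteq> {} \<and> \<xi> \<subseteq> halfspaces V E"
  unfolding roller_def by blast

lemma R_eq: "\<xi> \<inter> F = U_vert V E u \<inter> F \<Longrightarrow> k \<in> F \<Longrightarrow> k \<in> halfspaces V E \<Longrightarrow> (k \<in> \<xi>) = (u \<in> k)"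
proof -
  assume e: "\<xi> \<inter> F = U_vert V E u \<inter> F" and k: "k \<in> F" and kH: "k \<in> halfspaces V E"
  have "(k \<in> \<xi> \<inter> F) = (k \<in> U_vert V E u \<inter> F)" using e by simp
  then show ?thesis using k kH unfolding U_vert_def by simp
qed

lemma R_get: "\<xi> \<in> roller V E \<Longrightarrow> finite F \<Longrightarrow> F \<subseteq> halfspaces V E \<Longrightarrow>
   \<exists>v\<in>V. \<xi> \<inter> F = U_vert V E v \<inter> F"
  unfolding roller_def by simp

lemma R1a: "\<xi> \<in> roller V E \<Longrightarrow> h \<in> halfspaces V E \<Longrightarrow> (h \<in> \<xi>) = (V - h \<notin> \<xi>)"
proof -
  assume x: "\<xi> \<in> roller V E" and h: "h \<in> halfspaces V E"
  have hc: "V - h \<in> halfspaces V E" using compl_H[OF h] .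
  obtain u where u: "u \<in> V" "\<xi> \<inter> {h, V - h} = U_vert V E u \<inter> {h, V - h}"
    using R_get[OF x, of "{h, V - h}"] h hc by auto
  have 1: "(h \<in> \<xi>) = (u \<in> h)" using R_eq[OF u(2) _ h] by simp
  have 2: "(V - h \<in> \<xi>) = (u \<in> V - h)" using R_eq[OF u(2) _ hc] by simp
  show ?thesis unfolding 1 2 using u(1) by simp
qed

lemma R1b: "\<xi> \<in> roller V E \<Longrightarrow> h \<in> \<xi> \<Longrightarrow> k \<in> \<xi> \<Longrightarrow> h \<inter> k \<noteq> {}"
proof -
  assume x: "\<xi> \<in> roller V E" and h: "h \<in> \<xi>" and k: "k \<in> \<xi>"
  have hH: "h \<in> halfspaces V E" and kH: "k \<in> halfspaces V E" using h k R0[OF x] by auto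
  obtain u where u: "u \<in> V" "\<xi> \<inter> {h, k} = U_vert V E u \<inter> {h, k}"
    using R_get[OF x, of "{h, k}"] hH kH by auto
  have "u \<in> h" using R_eq[OF u(2) _ hH] h by simp
  moreover have "u \<in> k" using R_eq[OF u(2) _ kH] k by simp
  ultimately show ?thesis by blast
qed

lemma helly3:
  assumes "gconvex V E A" "gconvex V E B" "gconvex V E C"
    and "A \<inter> B \<noteq> {}" "B \<inter> C \<noteq> {}" "A \<inter> C \<noteq> {}"
  shows "A \<inter> B \<inter> C \<noteq> {}"
proof -
  obtain a b c where abc: "a \<in> B \<inter> C" "b \<in> A \<inter> C" "c \<in> A \<inter> B" using assms(4-6) by blast
  have V: "a \<in> V" "b \<in> V" "c \<in> V" using abc assms(1-3) unfolding gconvex_def by blast+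
  obtain m where m: "m \<in> ginterval V E a b \<inter> ginterval V E b c \<inter> ginterval V E a c"
    using med V unfolding median_graph_def by blast
  have "m \<in> A" using m abc assms(1) unfolding gconvex_def by blast
  moreover have "m \<in> B" using m abc assms(2) unfolding gconvex_def by blast
  moreover have "m \<in> C" using m abc assms(3) unfolding gconvex_def by blast
  ultimately show ?thesis by blast
qed

lemma gconvex_Int: "gconvex V E A \<Longrightarrow> gconvex V E B \<Longrightarrow> gconvex V E (A \<inter> B)"
  unfolding gconvex_def by blast

lemma helly:
  "finite \<A> \<Longrightarrow> \<A> \<noteq> {} \<Longrightarrow> \<forall>A\<in>\<A>. gconvex V E A \<Longrightarrow> \<forall>A\<in>\<A>. \<forall>B\<in>\<A>. A \<inter> B \<noteq> {}
    \<Longrightarrow> \<exists>x. \<forall>A\<in>\<A>. x \<in> A"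
proof (induction "card \<A>" arbitrary: \<A> rule: less_induct)
  case less
  obtain A where A: "A \<in> \<A>" using less.prems by blast
  show ?case
  proof (cases "\<A> = {A}")
    case True
    then show ?thesis using less.prems(4) A by blast
  next
    case False
    define \<A>0 where "\<A>0 = \<A> - {A}"
    have ne: "\<A>0 \<noteq> {}" using False A \<A>0_def by blast
    define \<A>' where "\<A>' = (\<lambda>B. A \<inter> B) ` \<A>0"
    have "card \<A>' \<le> card \<A>0" unfolding \<A>'_def by (rule card_image_le) (simp add: \<A>0_def less.prems)
    also have "\<dots> < card \<A>" unfolding \<A>0_def by (rule card_Diff1_less[OF less.prems(1) A])
    finally have lt: "card \<A>' < card \<A>" .
    have "\<exists>x. \<forall>C\<in>\<A>'. x \<in> C"
    proof (rule less.hyps[OF lt])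
      show "finite \<A>'" unfolding \<A>'_def \<A>0_def using less.prems by simp
      show "\<A>' \<noteq> {}" unfolding \<A>'_def using ne by simp
      show "\<forall>C\<in>\<A>'. gconvex V E C" unfolding \<A>'_def \<A>0_def
        using less.prems(3) A gconvex_Int by blast
      show "\<forall>C\<in>\<A>'. \<forall>D\<in>\<A>'. C \<inter> D \<noteq> {}"
      proof (intro ballI)
        fix C D assume "C \<in> \<A>'" "D \<in> \<A>'"
        then obtain B1 B2 where B: "B1 \<in> \<A>" "B2 \<in> \<A>" "C = A \<inter> B1" "D = A \<inter> B2"
          unfolding \<A>'_def \<A>0_def by blast
        have "A \<inter> B1 \<inter> B2 \<noteq> {}"
          using helly3[of A B1 B2] B A less.prems(3,4) by blast
        then show "C \<inter> D \<noteq> {}" using B by blast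
      qed
    qed
    then obtain x where x: "\<forall>C\<in>\<A>'. x \<in> C" by blast
    have "\<forall>B\<in>\<A>. x \<in> B"
    proof
      fix B assume B: "B \<in> \<A>"
      obtain B0 where "B0 \<in> \<A>0" using ne by blast
      then have "x \<in> A" using x unfolding \<A>'_def by blast
      moreover have "B \<noteq> A \<Longrightarrow> x \<in> B" using x B unfolding \<A>'_def \<A>0_def by blast
      ultimately show "x \<in> B" by blast
    qed
    then show ?thesis by blast
  qed
qed

lemma R2:
  assumes "V \<noteq> {}" "U \<subseteq> halfspaces V E" "\<forall>h\<in>halfspaces V E. h \<in> U \<or> V - h \<in> U"
    "\<forall>h\<in>U. \<forall>k\<in>U. h \<inter> k \<noteq> {}"
  shows "U \<in> roller V E"
  unfolding roller_def
proof (intro CollectI conjI allI impI)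
  show "U \<subseteq> halfspaces V E" by fact
  fix F assume F: "finite F \<and> F \<subseteq> halfspaces V E"
  define \<A> where "\<A> = insert V (U \<inter> (F \<union> (\<lambda>h. V - h) ` F))"
  have cV: "gconvex V E V" unfolding gconvex_def ginterval_def by blast
  have "\<exists>x. \<forall>A\<in>\<A>. x \<in> A"
  proof (rule helly)
    show "finite \<A>" unfolding \<A>_def using F by simp
    show "\<A> \<noteq> {}" unfolding \<A>_def by simp
    show "\<forall>A\<in>\<A>. gconvex V E A" unfolding \<A>_def using cV assms(2)
      unfolding halfspaces_def by blast
    show "\<forall>A\<in>\<A>. \<forall>B\<in>\<A>. A \<inter> B \<noteq> {}"
    proof (intro ballI)
      fix A B assume "A \<in> \<A>" "B \<in> \<A>"
      moreover have "\<And>h. h \<in> U \<Longrightarrow> V \<inter> h \<noteq> {} \<and> h \<inter> V \<noteq> {}"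
        using assms(2) unfolding halfspaces_def by blast
      ultimately show "A \<inter> B \<noteq> {}" using assms(1,4) unfolding \<A>_def by blast
    qed
  qed
  then obtain x where x: "\<forall>A\<in>\<A>. x \<in> A" by blast
  have xV: "x \<in> V" using x unfolding \<A>_def by blast
  have "U \<inter> F = U_vert V E x \<inter> F"
    apply (rule Set.set_eqI)
    apply (rule iffI)
  proof -
    fix h assume "h \<in> U \<inter> F"
    then show "h \<in> U_vert V E x \<inter> F" using x assms(2) unfolding \<A>_def U_vert_def by blast
  next
    fix h assume h: "h \<in> U_vert V E x \<inter> F"
    show "h \<in> U \<inter> F"
    proof (rule ccontr)
      assume "h \<notin> U \<inter> F"
      then have "V - h \<in> U" using h assms(3) F by blast
      then have "x \<in> V - h" using x h unfolding \<A>_def by blast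
      then show False using h unfolding U_vert_def by blast
    qed
  qed
  then show "\<exists>v\<in>V. U \<inter> F = U_vert V E v \<inter> F" using xV by blast
qed

lemma act_roller: "g \<in> carrier G \<Longrightarrow> \<xi> \<in> roller V E \<Longrightarrow> roller_act \<phi> g \<xi> \<in> roller V E"
proof -
  assume g: "g \<in> carrier G" and x: "\<xi> \<in> roller V E"
  have xP: "\<xi> \<subseteq> Pow V" using R0[OF x] H_Pow by blast
  show ?thesis
  proof (rule R2)
    show "V \<noteq> {}" using R0[OF x] by blast
    show "roller_act \<phi> g \<xi> \<subseteq> halfspaces V E"
      unfolding roller_act_def using R0[OF x] hs_img[OF g] by blast
    show "\<forall>h\<in>halfspaces V E. h \<in> roller_act \<phi> g \<xi> \<or> V - h \<in> roller_act \<phi> g \<xi>"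
    proof
      fix h assume h: "h \<in> halfspaces V E"
      define h' where "h' = \<phi> (inv\<^bsub>G\<^esub> g) ` h"
      have h'H: "h' \<in> halfspaces V E" unfolding h'_def using hs_img[OF invc[OF g] h] .
      have "\<phi> (inv\<^bsub>G\<^esub> g) ` (V - h) = V - h'"
        unfolding h'_def using img_diff[OF invc[OF g] hsV[OF h]] .
      then show "h \<in> roller_act \<phi> g \<xi> \<or> V - h \<in> roller_act \<phi> g \<xi>"
        using mem_act[OF g xP hsV[OF h]] mem_act[OF g xP, of "V - h"] R1a[OF x h'H] h'_def
        by auto
    qed
    show "\<forall>h\<in>roller_act \<phi> g \<xi>. \<forall>k\<in>roller_act \<phi> g \<xi>. h \<inter> k \<noteq> {}"
      unfolding roller_act_def using R1b[OF x] by blast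
  qed
qed

lemma act_mono: "A \<subseteq> B \<Longrightarrow> roller_act \<phi> g A \<subseteq> roller_act \<phi> g B"
  unfolding roller_act_def by blast

lemma construct:
  assumes x: "\<xi> \<in> roller V E" and fin: "finite (roller_orbit G \<phi> \<xi>)"
  shows "\<exists>v\<in>roller V E. \<exists>w\<in>roller V E. \<exists>M. v \<inter> w = M \<and>
     (\<forall>g\<in>carrier G. roller_act \<phi> g M = M) \<and> (odd (card (roller_orbit G \<phi> \<xi>)) \<longrightarrow> v = M)"
proof -
  define Orb where "Orb = roller_orbit G \<phi> \<xi>"
  define n where "n = card Orb"
  define S where "S h = {\<zeta>\<in>Orb. h \<in> \<zeta>}" for h :: "'a set"
  define c where "c h = card (S h)" for h
  have finO: "finite Orb" using fin Orb_def by simp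
  have xP: "\<xi> \<subseteq> Pow V" using R0[OF x] H_Pow by blast
  have one_c: "\<one>\<^bsub>G\<^esub> \<in> carrier G" using grp by (simp add: group.is_monoid monoid.one_closed)
  have O1: "\<xi> \<in> Orb" unfolding Orb_def roller_orbit_def using act_one[OF xP] one_c by force
  have Oform: "\<And>\<zeta>. \<zeta> \<in> Orb \<Longrightarrow> \<exists>k\<in>carrier G. \<zeta> = roller_act \<phi> k \<xi>"
    unfolding Orb_def roller_orbit_def by blast
  have O2: "\<And>\<zeta>. \<zeta> \<in> Orb \<Longrightarrow> \<zeta> \<in> roller V E" using Oform act_roller x by blast
  have OP: "\<And>\<zeta>. \<zeta> \<in> Orb \<Longrightarrow> \<zeta> \<subseteq> Pow V" using O2 R0 H_Pow by blast
  have O3: "\<And>g \<zeta>. g \<in> carrier G \<Longrightarrow> \<zeta> \<in> Orb \<Longrightarrow> roller_act \<phi> g \<zeta> \<in> Orb"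
  proof -
    fix g \<zeta> assume g: "g \<in> carrier G" and z: "\<zeta> \<in> Orb"
    then obtain k where k: "k \<in> carrier G" "\<zeta> = roller_act \<phi> k \<xi>" using Oform by blast
    have "roller_act \<phi> g \<zeta> = roller_act \<phi> (g \<otimes>\<^bsub>G\<^esub> k) \<xi>" using act_comp[OF g k(1) xP] k(2) by simp
    moreover have "g \<otimes>\<^bsub>G\<^esub> k \<in> carrier G" using grp g k by (simp add: group.is_monoid monoid.m_closed)
    ultimately show "roller_act \<phi> g \<zeta> \<in> Orb" unfolding Orb_def roller_orbit_def by blast
  qed
  have injO: "\<And>g. g \<in> carrier G \<Longrightarrow> inj_on (roller_act \<phi> g) Orb"
  proof (rule inj_onI)
    fix g a b assume g: "g \<in> carrier G" and a: "a \<in> Orb" and b: "b \<in> Orb"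
      and e: "roller_act \<phi> g a = roller_act \<phi> g b"
    have "a = roller_act \<phi> (inv\<^bsub>G\<^esub> g) (roller_act \<phi> g a)" using act_inv[OF g OP[OF a]] by simp
    also have "\<dots> = roller_act \<phi> (inv\<^bsub>G\<^esub> g) (roller_act \<phi> g b)" using e by simp
    also have "\<dots> = b" using act_inv[OF g OP[OF b]] by simp
    finally show "a = b" .
  qed
  have memg: "\<And>g h \<zeta>. g \<in> carrier G \<Longrightarrow> h \<subseteq> V \<Longrightarrow> \<zeta> \<in> Orb \<Longrightarrow>
      (\<phi> g ` h \<in> roller_act \<phi> g \<zeta>) = (h \<in> \<zeta>)"
    using mem_act img_sub img_inv OP by metis
  have Simg: "\<And>g h. g \<in> carrier G \<Longrightarrow> h \<subseteq> V \<Longrightarrow> S (\<phi> g ` h) = roller_act \<phi> g ` S h"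
  proof -
    fix g h assume g: "g \<in> carrier G" and h: "h \<subseteq> V"
    show "S (\<phi> g ` h) = roller_act \<phi> g ` S h"
    proof (rule subset_antisym)
      show "roller_act \<phi> g ` S h \<subseteq> S (\<phi> g ` h)"
        unfolding S_def using memg[OF g h] O3[OF g] by auto
      show "S (\<phi> g ` h) \<subseteq> roller_act \<phi> g ` S h"
      proof
        fix \<zeta> assume z: "\<zeta> \<in> S (\<phi> g ` h)"
        define \<zeta>0 where "\<zeta>0 = roller_act \<phi> (inv\<^bsub>G\<^esub> g) \<zeta>"
        have z0: "\<zeta>0 \<in> Orb" using z O3[OF invc[OF g]] unfolding S_def \<zeta>0_def by blast
        have zz: "\<zeta> = roller_act \<phi> g \<zeta>0" unfolding \<zeta>0_def
          using act_inv2[OF g] OP z unfolding S_def by simp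
        have "h \<in> \<zeta>0" using memg[OF g h z0] z zz unfolding S_def by simp
        then show "\<zeta> \<in> roller_act \<phi> g ` S h" using z0 zz unfolding S_def by blast
      qed
    qed
  qed
  have cimg: "\<And>g h. g \<in> carrier G \<Longrightarrow> h \<subseteq> V \<Longrightarrow> c (\<phi> g ` h) = c h"
  proof -
    fix g h assume g: "g \<in> carrier G" and h: "h \<subseteq> V"
    have "inj_on (roller_act \<phi> g) (S h)" using injO[OF g] unfolding S_def
      by (rule inj_on_subset) blast
    then show "c (\<phi> g ` h) = c h" unfolding c_def Simg[OF g h] by (rule card_image)
  qed
  have npos: "0 < n" unfolding n_def using finO O1 card_gt_0_iff by blast
  have SO: "\<And>h. S h \<subseteq> Orb" unfolding S_def by blast
  have cle: "\<And>h. c h \<le> n" unfolding c_def n_def using SO finO by (simp add: card_mono)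
  have ccompl: "\<And>h. h \<in> halfspaces V E \<Longrightarrow> c (V - h) = n - c h"
  proof -
    fix h assume h: "h \<in> halfspaces V E"
    have "S (V - h) = Orb - S h" unfolding S_def using R1a[OF O2 h] by blast
    then show "c (V - h) = n - c h" unfolding c_def n_def
      using card_Diff_subset[OF finite_subset[OF SO finO] SO] by simp
  qed
  have meet: "\<And>h k. S h \<inter> S k \<noteq> {} \<Longrightarrow> h \<inter> k \<noteq> {}"
  proof -
    fix h k assume "S h \<inter> S k \<noteq> {}"
    then obtain \<zeta> where "\<zeta> \<in> Orb" "h \<in> \<zeta>" "k \<in> \<zeta>" unfolding S_def by blast
    then show "h \<inter> k \<noteq> {}" using R1b O2 by blast
  qed
  have hit: "\<And>h k. n < c h + c k \<Longrightarrow> h \<inter> k \<noteq> {}"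
  proof -
    fix h k assume lt: "n < c h + c k"
    have "S h \<inter> S k \<noteq> {}"
    proof
      assume d: "S h \<inter> S k = {}"
      have fh: "finite (S h)" "finite (S k)" using SO finO finite_subset by blast+
      have "card (S h \<union> S k) = c h + c k" unfolding c_def using card_Un_disjoint[OF fh d] .
      moreover have "card (S h \<union> S k) \<le> n" unfolding n_def using SO finO by (simp add: card_mono)
      ultimately show False using lt by simp
    qed
    then show "h \<inter> k \<noteq> {}" by (rule meet)
  qed
  have posH: "\<And>h. 0 < c h \<Longrightarrow> h \<in> halfspaces V E"
  proof -
    fix h assume "0 < c h"
    then have "S h \<noteq> {}" unfolding c_def by auto
    then obtain \<zeta> where "\<zeta> \<in> Orb" "h \<in> \<zeta>" unfolding S_def by blast
    then show "h \<in> halfspaces V E" using O2 R0 by blast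
  qed
  define M where "M = {h. n < 2 * c h}"
  define B where "B = {h. 2 * c h = n}"
  have MH: "M \<subseteq> halfspaces V E" unfolding M_def using posH by (auto intro!: posH)
  have BH: "B \<subseteq> halfspaces V E" unfolding B_def using posH npos by (auto intro!: posH)
  define v where "v = M \<union> (B \<inter> \<xi>)"
  define w where "w = M \<union> (B - \<xi>)"
  have MB: "M \<inter> B = {}" unfolding M_def B_def by auto
  have vw: "v \<inter> w = M" unfolding v_def w_def using MB by blast
  have Mfix: "\<forall>g\<in>carrier G. roller_act \<phi> g M = M"
  proof
    fix g assume g: "g \<in> carrier G"
    have MP: "M \<subseteq> Pow V" using MH H_Pow by blast
    show "roller_act \<phi> g M = M"
    proof (rule Set.set_eqI)
      fix h
      show "(h \<in> roller_act \<phi> g M) = (h \<in> M)"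
      proof (cases "h \<subseteq> V")
        case True
        have "c (\<phi> (inv\<^bsub>G\<^esub> g) ` h) = c h" using cimg[OF invc[OF g] True] .
        then show ?thesis using mem_act[OF g MP True] unfolding M_def by simp
      next
        case False
        then show ?thesis using act_sub[OF g MP] MP by blast
      qed
    qed
  qed
  have Vne: "V \<noteq> {}" using R0[OF x] by blast
  have vR: "v \<in> roller V E"
  proof (rule R2[OF Vne])
    show "v \<subseteq> halfspaces V E" unfolding v_def using MH BH by blast
    show "\<forall>h\<in>halfspaces V E. h \<in> v \<or> V - h \<in> v"
    proof
      fix h assume h: "h \<in> halfspaces V E"
      have cc: "c (V - h) = n - c h" "c h \<le> n" using ccompl[OF h] cle by auto
      consider "n < 2 * c h" | "2 * c h < n" | "2 * c h = n" by linarith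
      then show "h \<in> v \<or> V - h \<in> v"
      proof cases
        case 1 then show ?thesis unfolding v_def M_def by simp
      next
        case 2 then have "n < 2 * c (V - h)" using cc by simp
        then show ?thesis unfolding v_def M_def by simp
      next
        case 3 then have "2 * c (V - h) = n" using cc by simp
        then show ?thesis using 3 R1a[OF x h] unfolding v_def B_def by auto
      qed
    qed
    show "\<forall>h\<in>v. \<forall>k\<in>v. h \<inter> k \<noteq> {}"
    proof (intro ballI)
      fix h k assume h: "h \<in> v" and k: "k \<in> v"
      show "h \<inter> k \<noteq> {}"
      proof (cases "h \<in> M \<or> k \<in> M")
        case True
        have "n \<le> 2 * c h" "n \<le> 2 * c k" using h k unfolding v_def M_def B_def by auto
        then have "n < c h + c k" using True unfolding M_def by auto
        then show ?thesis by (rule hit)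
      next
        case False
        then have "h \<in> \<xi>" "k \<in> \<xi>" using h k unfolding v_def by auto
        then show ?thesis using R1b[OF x] by blast
      qed
    qed
  qed
  have wR: "w \<in> roller V E"
  proof (rule R2[OF Vne])
    show "w \<subseteq> halfspaces V E" unfolding w_def using MH BH by blast
    show "\<forall>h\<in>halfspaces V E. h \<in> w \<or> V - h \<in> w"
    proof
      fix h assume h: "h \<in> halfspaces V E"
      have cc: "c (V - h) = n - c h" "c h \<le> n" using ccompl[OF h] cle by auto
      consider "n < 2 * c h" | "2 * c h < n" | "2 * c h = n" by linarith
      then show "h \<in> w \<or> V - h \<in> w"
      proof cases
        case 1 then show ?thesis unfolding w_def M_def by simp
      next
        case 2 then have "n < 2 * c (V - h)" using cc by simp
        then show ?thesis unfolding w_def M_def by simp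
      next
        case 3 then have "2 * c (V - h) = n" using cc by simp
        then show ?thesis using 3 R1a[OF x h] unfolding w_def B_def by auto
      qed
    qed
    show "\<forall>h\<in>w. \<forall>k\<in>w. h \<inter> k \<noteq> {}"
    proof (intro ballI)
      fix h k assume h: "h \<in> w" and k: "k \<in> w"
      show "h \<inter> k \<noteq> {}"
      proof (cases "h \<in> M \<or> k \<in> M")
        case True
        have "n \<le> 2 * c h" "n \<le> 2 * c k" using h k unfolding w_def M_def B_def by auto
        then have "n < c h + c k" using True unfolding M_def by auto
        then show ?thesis by (rule hit)
      next
        case False
        then have hk: "h \<notin> \<xi>" "k \<notin> \<xi>" "2 * c h = n" "2 * c k = n"
          using h k unfolding w_def B_def by auto
        have "S h \<inter> S k \<noteq> {}"
        proof
          assume d: "S h \<inter> S k = {}"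
          have fh: "finite (S h)" "finite (S k)" using SO finO finite_subset by blast+
          have "card (S h \<union> S k) = c h + c k" unfolding c_def using card_Un_disjoint[OF fh d] .
          also have "\<dots> = card Orb" using hk unfolding n_def by simp
          finally have "S h \<union> S k = Orb" using card_subset_eq[OF finO] SO by (metis Un_subset_iff)
          then have "\<xi> \<in> S h \<union> S k" using O1 by simp
          then show False using hk unfolding S_def by blast
        qed
        then show ?thesis by (rule meet)
      qed
    qed
  qed
  have oddv: "odd (card (roller_orbit G \<phi> \<xi>)) \<longrightarrow> v = M"
  proof
    assume "odd (card (roller_orbit G \<phi> \<xi>))"
    then have "odd n" unfolding n_def Orb_def .
    then have "B = {}" unfolding B_def by auto
    then show "v = M" unfolding v_def by simp
  qed
  show ?thesis using vR wR vw Mfix oddv by blast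
qed

lemma interval_inv:
  assumes v: "v \<in> roller V E" and w: "w \<in> roller V E"
    and fx: "\<forall>g\<in>carrier G. roller_act \<phi> g (v \<inter> w) = v \<inter> w"
  shows "{roller_act \<phi> g m | g m. g \<in> carrier G \<and> m \<in> roller_interval V E v w}
           = roller_interval V E v w"
proof (rule subset_antisym)
  show "{roller_act \<phi> g m | g m. g \<in> carrier G \<and> m \<in> roller_interval V E v w}
           \<subseteq> roller_interval V E v w"
  proof
    fix y assume "y \<in> {roller_act \<phi> g m | g m. g \<in> carrier G \<and> m \<in> roller_interval V E v w}"
    then obtain g m where gm: "g \<in> carrier G" "m \<in> roller V E" "v \<inter> w \<subseteq> m" "y = roller_act \<phi> g m"
      unfolding roller_interval_def by blast
    have "y \<in> roller V E" using act_roller[OF gm(1,2)] gm(4) by simp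
    moreover have "v \<inter> w \<subseteq> y"
      using act_mono[OF gm(3), of g] fx gm(1) gm(4) by simp
    ultimately show "y \<in> roller_interval V E v w" unfolding roller_interval_def by blast
  qed
  show "roller_interval V E v w \<subseteq>
      {roller_act \<phi> g m | g m. g \<in> carrier G \<and> m \<in> roller_interval V E v w}"
  proof
    fix m assume m: "m \<in> roller_interval V E v w"
    then have "m \<subseteq> Pow V" using R0 H_Pow unfolding roller_interval_def by blast
    then have "m = roller_act \<phi> \<one>\<^bsub>G\<^esub> m" using act_one by simp
    moreover have "\<one>\<^bsub>G\<^esub> \<in> carrier G" using grp by (simp add: group.is_monoid monoid.one_closed)
    ultimately show "m \<in> {roller_act \<phi> g m | g m. g \<in> carrier G \<and> m \<in> roller_interval V E v w}"
      using m by blast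
  qed
qed

end

theorem proposition9p1:
  fixes G :: "('g, 'b) monoid_scheme" and V :: "'a set" and E :: "'a \<Rightarrow> 'a \<Rightarrow> bool"
    and \<phi> :: "'g \<Rightarrow> 'a \<Rightarrow> 'a"
  assumes "group G"
    and "median_graph V E" and "finite_dim V E" and "countable V"
    and "cube_action G V E \<phi>"
  shows "((\<exists>\<xi>\<in>roller V E. finite (roller_orbit G \<phi> \<xi>)) \<longrightarrow>
           (\<exists>v\<in>roller V E. \<exists>w\<in>roller V E.
              {roller_act \<phi> g m | g m. g \<in> carrier G \<and> m \<in> roller_interval V E v w}
                = roller_interval V E v w))
       \<and> ((\<exists>\<xi>\<in>roller V E. finite (roller_orbit G \<phi> \<xi>) \<and> odd (card (roller_orbit G \<phi> \<xi>))) \<longrightarrow>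
           (\<exists>\<xi>\<in>roller V E. \<forall>g\<in>carrier G. roller_act \<phi> g \<xi> = \<xi>))"
proof -
  interpret ccx G V E \<phi> by (rule ccx.intro) (fact assms(1), fact assms(2), fact assms(5))
  show ?thesis
  proof (intro conjI impI)
    assume "\<exists>\<xi>\<in>roller V E. finite (roller_orbit G \<phi> \<xi>)"
    then obtain \<xi> where x: "\<xi> \<in> roller V E" "finite (roller_orbit G \<phi> \<xi>)" by blast
    obtain v w M where vw: "v \<in> roller V E" "w \<in> roller V E" "v \<inter> w = M"
      "\<forall>g\<in>carrier G. roller_act \<phi> g M = M"
      using construct[OF x] by blast
    show "\<exists>v\<in>roller V E. \<exists>w\<in>roller V E.
              {roller_act \<phi> g m | g m. g \<in> carrier G \<and> m \<in> roller_interval V E v w}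
                = roller_interval V E v w"
      using interval_inv[OF vw(1,2)] vw(1-4) by blast
  next
    assume "\<exists>\<xi>\<in>roller V E. finite (roller_orbit G \<phi> \<xi>) \<and> odd (card (roller_orbit G \<phi> \<xi>))"
    then obtain \<xi> where x: "\<xi> \<in> roller V E" "finite (roller_orbit G \<phi> \<xi>)"
      "odd (card (roller_orbit G \<phi> \<xi>))" by blast
    obtain v w M where vw: "v \<in> roller V E" "v = M"
      "\<forall>g\<in>carrier G. roller_act \<phi> g M = M"
      using construct[OF x(1,2)] x(3) by blast
    show "\<exists>\<xi>\<in>roller V E. \<forall>g\<in>carrier G. roller_act \<phi> g \<xi> = \<xi>"
      using vw by blast
  qed
qed

end
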